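(* Let $0\le r\le m$, $H\in\mathcal G(m,r;2)$, $\mathbf S_r\in\mathrm{Sym}(r;2)$ and $\mathbf b\in\mathbb F_2^m$. Then $$\mathbf w^{H,\mathbf S_r}_{\mathbf b}=\mathbf G_D(\mathbf P_{\mathcal I}^T)\,\mathbf G_U(\tilde{\mathbf S}_r)\,\mathbf G_\Omega(r)\,\mathbf Z(m,r)\,\mathbf e_{\mathbf b},$$ where $\mathbf Z(m,r)=\mathbf I_{2^r}\otimes\sigma_z^{\otimes(m-r)}$. In particular each binary subspace chirp is, up to a sign $\pm1$, the $\mathbf b$-th column of the unitary matrix $\mathbf G_D(\mathbf P_{\mathcal I}^T)\mathbf G_U(\tilde{\mathbf S}_r)\mathbf G_\Omega(r)$.
   Context: Fix $m\ge1$, $N=2^m$. Binary vectors are columns over $\mathbb F_2$; $\mathrm{Sym}(r;2)$ is the set of symmetric binary $r\times r$ matrices, $\mathcal G(m,r;2)$ the set of $r$-dimensional subspaces of $\mathbb F_2^m$. The standard basis of $\mathbb C^N=(\mathbb C^2)^{\otimes m}$ is $\{\mathbf e_{\mathbf v}=\mathbf e_{v_1}\otimes\cdots\otimes\mathbf e_{v_m}:\mathbf v\in\mathbb F_2^m\}$ and vectors of $\mathbb C^N$ are indexed by $\mathbb F_2^m$. Whenever a binary expression appears in an exponent of $i$, binary entries are lifted to the integers $0,1$ and the expression is evaluated in $\mathbb Z$ (equivalently mod 4). $\sigma_z=\mathrm{diag}(1,-1)$. Clifford-type matrices: for $\mathbf Q\in\mathrm{GL}(m;2)$, $\mathbf G_D(\mathbf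 Q)$ is the permutation matrix with $\mathbf e_{\mathbf v}\mapsto\mathbf e_{\mathbf Q^T\mathbf v}$; for $\mathbf S\in\mathrm{Sym}(m;2)$, $\mathbf G_U(\mathbf S)=\mathrm{diag}(i^{\mathbf v^T\mathbf S\mathbf v})_{\mathbf v\in\mathbb F_2^m}$; $\mathbf G_\Omega(r)=\mathbf H_2^{\otimes r}\otimes\mathbf I_{2^{m-r}}$ with $\mathbf H_2=\frac1{\sqrt2}\begin{pmatrix}1&1\\1&-1\end{pmatrix}$. Echelon data: for $0\le r\le m$ and $H\in\mathcal G(m,r;2)$, let $\mathbf H_{\mathcal I}$ be the unique $m\times r$ binary matrix in column reduced echelon form with column space $H$: there are indices $i_1<\dots<i_r$, $\mathcal I=\{i_1,\dots,i_r\}$, such that rows $i_1,\dots,i_r$ of $\mathbf H_{\mathcal I}$ form $\mathbf I_r$ and column $j$ of $\mathbf H_{\mathcal I}$ is zero in all rows above row $i_j$. Let $\mathbf I_{\mathcal I}$ (resp. $\mathbf I_{\tilde{\mathcal I}}$) be the $m\times r$ (resp. $m\times(m-r)$) matrix whose columns are the standard basis vectors $\mathbf e_i$ with $i\in\mathcal I$ (resp. $i\notin\mathcal I$), in increasing order of $i$. Put $\mathbf P_{\mathcal I}=[\mathbf H_{\mathcal I}\ \ \mathbf I_{\tilde{\mathcal I}}]\in\mathrm{GL}(m;2)$, and define the $m\times(m-r)$ matrix $\tilde{\mathbf H}_{\mathcal I}$ by $\mathbf P_{\mathcal I}^{-T}=[\mathbf I_{\mathcal I}\ \ \tilde{\mathbf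 H}_{\mathcal I}]$. (For $r=0$: $H=\{0\}$, $\mathbf P_{\mathcal I}=\mathbf I_m$.) For $\mathbf S_r\in\mathrm{Sym}(r;2)$, $\tilde{\mathbf S}_r\in\mathrm{Sym}(m;2)$ denotes the matrix with $\mathbf S_r$ as its upper-left $r\times r$ block and zeros elsewhere. Binary subspace chirps: let $f(\mathbf v,\mathbf w,r)=\prod_{i=r+1}^m(1+v_i+w_i)$ computed in $\mathbb F_2$ and viewed in $\{0,1\}$ (so $f=1$ iff $\mathbf v,\mathbf w$ agree in their last $m-r$ coordinates). For $\mathbf b\in\mathbb F_2^m$, the binary subspace chirp (BSSC) $\mathbf w_{\mathbf b}=\mathbf w^{H,\mathbf S_r}_{\mathbf b}\in\mathbb C^N$ has entries $\mathbf w_{\mathbf b}(\mathbf a)=2^{-r/2}\,i^{\mathbf u^T\tilde{\mathbf S}_r\mathbf u+2\mathbf b^T\mathbf u}\,f(\mathbf b,\mathbf u,r)$ with $\mathbf u=\mathbf P_{\mathcal I}^{-1}\mathbf a\in\mathbb F_2^m$, for $\mathbf a\in\mathbb F_2^m$. The integer $r$ is its rank. *)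

theory Defs
  imports Complex_Main "HOL-Library.Z2" "Jordan_Normal_Form.Matrix"
begin

(* Binary vectors: bit vec of dimension m (coordinates indexed 0..m-1, paper index i is i-1 here).  Complex vectors of C^N are functions on carrier_vec m (binary
   index vectors), complex N x N matrices are functions of two binary index vectors. *)

definition lift :: "bit \<Rightarrow> nat" where
  "lift x = (if x = 1 then 1 else 0)"

definition sym_bin :: "nat \<Rightarrow> bit mat set" where
  "sym_bin r = {S. S \<in> carrier_mat r r \<and> transpose_mat S = S}"

definition colspace :: "bit mat \<Rightarrow> bit vec set" where
  "colspace A = {A *\<^sub>v x | x. x \<in> carrier_vec (dim_col A)}"

definition grassmannian :: "nat \<Rightarrow> nat \<Rightarrow> bit vec set set" where
  "grassmannian m r = {H. \<exists>A \<in> carrier_mat m r. colspace A = H \<and>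
       (\<forall>x \<in> carrier_vec r. A *\<^sub>v x = 0\<^sub>v m \<longrightarrow> x = 0\<^sub>v r)}"

definition cref_piv :: "nat \<Rightarrow> nat \<Rightarrow> bit mat \<Rightarrow> (nat \<Rightarrow> nat) \<Rightarrow> bool" where
  "cref_piv m r A piv \<longleftrightarrow> A \<in> carrier_mat m r \<and>
     (\<forall>j<r. piv j < m) \<and> (\<forall>j k. j < k \<and> k < r \<longrightarrow> piv j < piv k) \<and>
     (\<forall>j<r. \<forall>k<r. A $$ (piv j, k) = (if j = k then 1 else 0)) \<and>
     (\<forall>j<r. \<forall>i<piv j. A $$ (i, j) = 0)"

definition is_cref :: "nat \<Rightarrow> nat \<Rightarrow> bit mat \<Rightarrow> bool" where
  "is_cref m r A \<longleftrightarrow> (\<exists>piv. cref_piv m r A piv)"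

definition H_cref :: "nat \<Rightarrow> nat \<Rightarrow> bit vec set \<Rightarrow> bit mat" where
  "H_cref m r H = (THE A. is_cref m r A \<and> colspace A = H)"

definition piv_set :: "nat \<Rightarrow> nat \<Rightarrow> bit vec set \<Rightarrow> nat set" where
  "piv_set m r H = {i. \<exists>piv. cref_piv m r (H_cref m r H) piv \<and> (\<exists>j<r. i = piv j)}"

(* P_I = [H_I  I_~I] *)
definition P_mat :: "nat \<Rightarrow> nat \<Rightarrow> bit vec set \<Rightarrow> bit mat" where
  "P_mat m r H = mat m m (\<lambda>(i, j). if j < r then H_cref m r H $$ (i, j)
       else (if i = sorted_list_of_set ({..<m} - piv_set m r H) ! (j - r) then 1 else 0))"

definition bin_inv :: "nat \<Rightarrow> bit mat \<Rightarrow> bit mat" where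
  "bin_inv m P = (THE B. B \<in> carrier_mat m m \<and> P * B = 1\<^sub>m m \<and> B * P = 1\<^sub>m m)"

definition embed_sym :: "nat \<Rightarrow> nat \<Rightarrow> bit mat \<Rightarrow> bit mat" where
  "embed_sym m r S = mat m m (\<lambda>(i, j). if i < r \<and> j < r then S $$ (i, j) else 0)"

definition qform :: "nat \<Rightarrow> bit mat \<Rightarrow> bit vec \<Rightarrow> nat" where
  "qform m S v = (\<Sum>j<m. \<Sum>k<m. lift (v $ j) * lift (S $$ (j, k)) * lift (v $ k))"

definition iprod :: "nat \<Rightarrow> bit vec \<Rightarrow> bit vec \<Rightarrow> nat" where
  "iprod m b u = (\<Sum>j<m. lift (b $ j) * lift (u $ j))"

definition f_agree :: "nat \<Rightarrow> bit vec \<Rightarrow> bit vec \<Rightarrow> nat \<Rightarrow> nat" where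
  "f_agree m v w r = lift (\<Prod>i\<in>{r..<m}. 1 + v $ i + w $ i)"

definition bssc :: "nat \<Rightarrow> nat \<Rightarrow> bit vec set \<Rightarrow> bit mat \<Rightarrow> bit vec \<Rightarrow> bit vec \<Rightarrow> complex" where
  "bssc m r H S b a = (let u = bin_inv m (P_mat m r H) *\<^sub>v a in
     complex_of_real (2 powr (- real r / 2)) *
     \<i> ^ (qform m (embed_sym m r S) u + 2 * iprod m b u) * of_nat (f_agree m b u r))"

type_synonym cmat = "bit vec \<Rightarrow> bit vec \<Rightarrow> complex"

definition cmult :: "nat \<Rightarrow> cmat \<Rightarrow> cmat \<Rightarrow> cmat" where
  "cmult m A B = (\<lambda>a c. \<Sum>d\<in>carrier_vec m. A a d * B d c)"

definition capp :: "nat \<Rightarrow> cmat \<Rightarrow> (bit vec \<Rightarrow> complex) \<Rightarrow> bit vec \<Rightarrow> complex" where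
  "capp m A x = (\<lambda>a. \<Sum>d\<in>carrier_vec m. A a d * x d)"

definition std_basis :: "bit vec \<Rightarrow> bit vec \<Rightarrow> complex" where
  "std_basis b = (\<lambda>a. if a = b then 1 else 0)"

definition unitary_c :: "nat \<Rightarrow> cmat \<Rightarrow> bool" where
  "unitary_c m U \<longleftrightarrow> (\<forall>a\<in>carrier_vec m. \<forall>a'\<in>carrier_vec m.
      (\<Sum>c\<in>carrier_vec m. U a c * cnj (U a' c)) = (if a = a' then 1 else 0))"

(* Kronecker product A_0 (x) ... (x) A_{m-1} of 2x2 matrices, w.r.t. e_v = e_{v_1} (x) ... (x) e_{v_m} *)
definition tensor2 :: "nat \<Rightarrow> (nat \<Rightarrow> bit \<Rightarrow> bit \<Rightarrow> complex) \<Rightarrow> cmat" where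
  "tensor2 m A = (\<lambda>a c. \<Prod>i<m. A i (a $ i) (c $ i))"

definition id2 :: "bit \<Rightarrow> bit \<Rightarrow> complex" where
  "id2 x y = (if x = y then 1 else 0)"

definition hadamard2 :: "bit \<Rightarrow> bit \<Rightarrow> complex" where
  "hadamard2 x y = complex_of_real (1 / sqrt 2) * (if x = 1 \<and> y = 1 then -1 else 1)"

definition sigma_z :: "bit \<Rightarrow> bit \<Rightarrow> complex" where
  "sigma_z x y = (if x = y then (if x = 1 then -1 else 1) else 0)"

definition G_D :: "nat \<Rightarrow> bit mat \<Rightarrow> cmat" where
  "G_D m Q = (\<lambda>a c. if a = transpose_mat Q *\<^sub>v c then 1 else 0)"

definition G_U :: "nat \<Rightarrow> bit mat \<Rightarrow> cmat" where
  "G_U m S = (\<lambda>a c. if a = c then \<i> ^ qform m S a else 0)"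

definition G_Omega :: "nat \<Rightarrow> nat \<Rightarrow> cmat" where
  "G_Omega m r = tensor2 m (\<lambda>i. if i < r then hadamard2 else id2)"

definition Z_mat :: "nat \<Rightarrow> nat \<Rightarrow> cmat" where
  "Z_mat m r = tensor2 m (\<lambda>i. if i < r then id2 else sigma_z)"

end

theory Submission
  imports Defs "Jordan_Normal_Form.Determinant" "HOL-Library.FuncSet"
begin

lemma mult_unit_vec_index:
  assumes A: "(A :: 'a :: semiring_1 mat) \<in> carrier_mat m r" and i: "i < m" and k: "k < r"
  shows "(A *\<^sub>v unit_vec r k) $ i = A $$ (i, k)"
proof -
  have "(A *\<^sub>v unit_vec r k) $ i = (\<Sum>j\<in>{0..<r}. A $$ (i, j) * unit_vec r k $ j)"
    using A i by (auto simp: scalar_prod_def)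
  also have "\<dots> = (\<Sum>j\<in>{0..<r}. if j = k then A $$ (i, j) else 0)"
    by (rule sum.cong) (use k in auto)
  also have "\<dots> = A $$ (i, k)" using k by simp
  finally show ?thesis .
qed

lemma mat_vec_zero: "(A :: 'a :: semiring_0 mat) \<in> carrier_mat n k \<Longrightarrow> A *\<^sub>v 0\<^sub>v k = 0\<^sub>v n"
  by (intro eq_vecI) auto

lemma cref_mult:
  assumes c: "cref_piv m r A p" and x: "x \<in> carrier_vec r" and j: "j < r"
  shows "(A *\<^sub>v x) $ p j = x $ j"
proof -
  from c have A: "A \<in> carrier_mat m r" and pj: "p j < m"
    and d: "\<forall>k<r. A $$ (p j, k) = (if j = k then 1 else 0)"
    using j unfolding cref_piv_def by auto
  have "(A *\<^sub>v x) $ p j = (\<Sum>k\<in>{0..<r}. A $$ (p j, k) * x $ k)"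
    using A x pj by (auto simp: scalar_prod_def)
  also have "\<dots> = (\<Sum>k\<in>{0..<r}. if k = j then x $ k else 0)"
    by (rule sum.cong) (use d in auto)
  also have "\<dots> = x $ j" using j by simp
  finally show ?thesis .
qed

lemma cref_repr:
  assumes c: "cref_piv m r A p" and v: "v \<in> colspace A"
  shows "v = A *\<^sub>v vec r (\<lambda>j. v $ p j)"
proof -
  from c have A: "A \<in> carrier_mat m r" unfolding cref_piv_def by auto
  from v obtain x where x: "x \<in> carrier_vec r" and vx: "v = A *\<^sub>v x"
    unfolding colspace_def using A by auto
  have "vec r (\<lambda>j. v $ p j) = x"
    by (rule eq_vecI) (use x cref_mult[OF c x] vx in auto)
  thus ?thesis using vx by simp
qed

lemma cref_mono:
  assumes c: "cref_piv m r A p" and "j \<le> k" "k < r"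
  shows "p j \<le> p k"
  using assms unfolding cref_piv_def by (metis le_neq_implies_less less_imp_le order_refl)

lemma cref_piv_step:
  assumes A: "cref_piv m r A p" and B: "cref_piv m r B q"
    and sub: "colspace A \<subseteq> colspace B" and j: "j < r"
    and eq: "\<forall>k<j. p k = q k"
  shows "\<not> p j < q j"
proof
  assume lt: "p j < q j"
  have Ac: "A \<in> carrier_mat m r" and Bc: "B \<in> carrier_mat m r"
    using A B unfolding cref_piv_def by auto
  define a where "a = A *\<^sub>v unit_vec r j"
  have aA: "a \<in> colspace A" unfolding colspace_def a_def using Ac by auto
  have ap: "\<And>k. k < r \<Longrightarrow> a $ p k = (if k = j then 1 else 0)"
    unfolding a_def using cref_mult[OF A unit_vec_carrier] j by auto
  have aB: "a \<in> colspace B" using aA sub by auto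
  define y where "y = vec r (\<lambda>k. a $ q k)"
  have ay: "a = B *\<^sub>v y" using cref_repr[OF B aB] y_def by simp
  have pjm: "p j < m" using A j unfolding cref_piv_def by auto
  have "(B *\<^sub>v y) $ p j = (\<Sum>k\<in>{0..<r}. B $$ (p j, k) * y $ k)"
    using Bc pjm y_def by (auto simp: scalar_prod_def)
  also have "\<dots> = 0"
  proof (rule sum.neutral, rule ballI)
    fix k assume k: "k \<in> {0..<r}"
    show "B $$ (p j, k) * y $ k = 0"
    proof (cases "k < j")
      case True
      then have "y $ k = a $ p k" using eq k y_def by auto
      also have "\<dots> = 0" using ap True k by auto
      finally show ?thesis by simp
    next
      case False
      then have "q j \<le> q k" using cref_mono[OF B] k by auto
      then have "p j < q k" using lt by auto
      then have "B $$ (p j, k) = 0" using B k unfolding cref_piv_def by auto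
      thus ?thesis by simp
    qed
  qed
  finally have "a $ p j = 0" using ay by simp
  moreover have "a $ p j = 1" using ap j by simp
  ultimately show False by simp
qed

lemma cref_piv_same:
  assumes A: "cref_piv m r A p" and B: "cref_piv m r B q" and eq: "colspace A = colspace B"
  shows "\<forall>j<r. p j = q j"
proof -
  have "j < r \<longrightarrow> p j = q j" for j
  proof (induction j rule: less_induct)
    case (less j)
    show ?case
    proof
      assume j: "j < r"
      have e: "\<forall>k<j. p k = q k" using less j by auto
      have "\<not> p j < q j" using cref_piv_step[OF A B _ j e] eq by auto
      moreover have "\<not> q j < p j" using cref_piv_step[OF B A _ j] e eq by auto
      ultimately show "p j = q j" by auto
    qed
  qed
  thus ?thesis by auto
qed

lemma cref_unique:
  assumes A: "cref_piv m r A p" and B: "cref_piv m r B q" and eq: "colspace A = colspace B"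
  shows "A = B"
proof -
  have Ac: "A \<in> carrier_mat m r" and Bc: "B \<in> carrier_mat m r"
    using A B unfolding cref_piv_def by auto
  have pq: "\<forall>j<r. p j = q j" using cref_piv_same[OF A B eq] .
  show ?thesis
  proof (rule eq_matI)
    fix i k assume i: "i < dim_row B" and k: "k < dim_col B"
    then have i: "i < m" and k: "k < r" using Bc by auto
    define b where "b = B *\<^sub>v unit_vec r k"
    have "b \<in> colspace A" using eq Bc unfolding colspace_def b_def by auto
    then have "b = A *\<^sub>v vec r (\<lambda>j. b $ p j)" using cref_repr[OF A] by blast
    also have "vec r (\<lambda>j. b $ p j) = unit_vec r k"
      by (rule eq_vecI) (use pq cref_mult[OF B unit_vec_carrier] k in \<open>auto simp: b_def\<close>)
    finally have "b $ i = (A *\<^sub>v unit_vec r k) $ i" by simp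
    thus "A $$ (i, k) = B $$ (i, k)"
      using mult_unit_vec_index[OF Ac i k] mult_unit_vec_index[OF Bc i k] b_def by simp
  qed (use Ac Bc in auto)
qed

lemma pivot_strict:
  assumes "\<And>i. Suc i < r \<Longrightarrow> (f i :: nat) < f (Suc i)"
  shows "j < k \<Longrightarrow> k < r \<Longrightarrow> f j < f k"
proof (induction k)
  case 0 then show ?case by simp
next
  case (Suc k)
  show ?case
  proof (cases "j = k")
    case True then show ?thesis using assms Suc by simp
  next
    case False
    then have "f j < f k" using Suc by auto
    also have "f k < f (Suc k)" using assms Suc by simp
    finally show ?thesis .
  qed
qed

lemma cref_exists:
  assumes H: "H \<in> grassmannian m r"
  shows "\<exists>A p. cref_piv m r A p \<and> colspace A = H"
proof -
  from H obtain A0 where A0: "A0 \<in> carrier_mat m r" and cs: "colspace A0 = H"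
    and inj: "\<forall>x \<in> carrier_vec r. A0 *\<^sub>v x = 0\<^sub>v m \<longrightarrow> x = 0\<^sub>v r"
    unfolding grassmannian_def by auto
  define T where "T = transpose_mat A0"
  have T: "T \<in> carrier_mat r m" using A0 T_def by auto
  define C where "C = gauss_jordan_single T"
  note g = gauss_jordan_single[OF T C_def[symmetric]]
  have C: "C \<in> carrier_mat r m" using g by auto
  from g obtain P Q where CP: "C = P * T" and P: "P \<in> carrier_mat r r" and Q: "Q \<in> carrier_mat r r"
    and PQ: "P * Q = 1\<^sub>m r" and QP: "Q * P = 1\<^sub>m r" by auto
  from g(3) obtain f where pf: "pivot_fun C f m" unfolding row_echelon_form_def using C by auto
  define A where "A = transpose_mat C"
  have Ac: "A \<in> carrier_mat m r" using C A_def by auto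
  have AA0: "A = A0 * transpose_mat P"
  proof -
    have "transpose_mat (P * T) = transpose_mat T * transpose_mat P" using transpose_mult[OF P T] .
    thus ?thesis unfolding A_def CP T_def by simp
  qed
  have PtQt: "transpose_mat P * transpose_mat Q = 1\<^sub>m r"
    using transpose_mult[OF Q P] QP by simp
  have QtPt: "transpose_mat Q * transpose_mat P = 1\<^sub>m r"
    using transpose_mult[OF P Q] PQ by simp
  have Pt: "transpose_mat P \<in> carrier_mat r r" and Qt: "transpose_mat Q \<in> carrier_mat r r"
    using P Q by auto
  have pfC: "\<And>i. i < r \<Longrightarrow> f i \<le> m \<and>
      (f i < m \<longrightarrow> C $$ (i, f i) = 1 \<and> (\<forall>i'<r. i' \<noteq> i \<longrightarrow> C $$ (i', f i) = 0)) \<and>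
      (\<forall>j<f i. C $$ (i, j) = 0) \<and> (Suc i < r \<longrightarrow> f i < f (Suc i) \<or> f (Suc i) = m)"
    using pf C unfolding pivot_fun_def Let_def by auto
  have flt: "f i < m" if i: "i < r" for i
  proof (rule ccontr)
    assume "\<not> f i < m"
    then have z: "\<forall>j<m. C $$ (i, j) = 0" using pfC[OF i] by auto
    define u :: "bit vec" where "u = unit_vec r i"
    have "A *\<^sub>v u = 0\<^sub>v m"
    proof (rule eq_vecI)
      fix t assume "t < dim_vec (0\<^sub>v m :: bit vec)"
      then have t: "t < m" by simp
      have "(A *\<^sub>v u) $ t = A $$ (t, i)" using mult_unit_vec_index[OF Ac t i] u_def by simp
      also have "\<dots> = C $$ (i, t)" unfolding A_def using C t i by simp
      finally show "(A *\<^sub>v u) $ t = 0\<^sub>v m $ t" using z t by simp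
    qed (use Ac in auto)
    then have "A0 *\<^sub>v (transpose_mat P *\<^sub>v u) = 0\<^sub>v m"
      unfolding AA0 using A0 Pt u_def by simp
    moreover have "transpose_mat P *\<^sub>v u \<in> carrier_vec r" using Pt u_def by simp
    ultimately have "transpose_mat P *\<^sub>v u = 0\<^sub>v r" using inj by blast
    then have "transpose_mat Q *\<^sub>v (transpose_mat P *\<^sub>v u) = 0\<^sub>v r" using mat_vec_zero[OF Qt] by simp
    moreover have "transpose_mat Q *\<^sub>v (transpose_mat P *\<^sub>v u) = u"
    proof -
      have "transpose_mat Q *\<^sub>v (transpose_mat P *\<^sub>v u) = (transpose_mat Q * transpose_mat P) *\<^sub>v u"
        using Qt Pt u_def by simp
      also have "\<dots> = u" using QtPt u_def by simp
      finally show ?thesis .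
    qed
    ultimately have "u = 0\<^sub>v r" by simp
    thus False using u_def i by simp
  qed
  have mono: "\<And>j k. j < k \<and> k < r \<longrightarrow> f j < f k"
  proof (intro impI)
    fix j k assume jk: "j < k \<and> k < r"
    have "f i < f (Suc i)" if si: "Suc i < r" for i
    proof -
      have "f i < f (Suc i) \<or> f (Suc i) = m" using pfC[of i] si by simp
      moreover have "f (Suc i) < m" using flt si by simp
      ultimately show ?thesis by auto
    qed
    thus "f j < f k" using pivot_strict jk by blast
  qed
  have cr: "cref_piv m r A f"
    unfolding cref_piv_def
  proof (intro conjI allI impI)
    show "A \<in> carrier_mat m r" by fact
    show "\<And>j. j < r \<Longrightarrow> f j < m" by (rule flt)
    show "\<And>j k. j < k \<and> k < r \<Longrightarrow> f j < f k" using mono by blast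
    show "A $$ (f j, k) = (if j = k then 1 else 0)" if "j < r" "k < r" for j k
    proof -
      have fj: "f j < m" using flt that by simp
      have "A $$ (f j, k) = C $$ (k, f j)" unfolding A_def using C fj that by simp
      also have "\<dots> = (if j = k then 1 else 0)"
        using pfC[OF that(1)] fj that by (cases "j = k") auto
      finally show ?thesis .
    qed
    show "A $$ (i, j) = 0" if "j < r" "i < f j" for i j
    proof -
      have fj: "i < m" using flt that by (meson less_trans)
      have "A $$ (i, j) = C $$ (j, i)" unfolding A_def using C fj that by simp
      also have "\<dots> = 0" using pfC[OF that(1)] that by blast
      finally show ?thesis .
    qed
  qed
  have "colspace A = colspace A0"
  proof
    show "colspace A \<subseteq> colspace A0"
    proof
      fix v assume "v \<in> colspace A"
      then obtain x where x: "x \<in> carrier_vec r" and v: "v = A *\<^sub>v x"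
        unfolding colspace_def using Ac by auto
      have "v = A0 *\<^sub>v (transpose_mat P *\<^sub>v x)" using v AA0 A0 Pt x by simp
      thus "v \<in> colspace A0" unfolding colspace_def using A0 Pt x by fastforce
    qed
    show "colspace A0 \<subseteq> colspace A"
    proof
      fix v assume "v \<in> colspace A0"
      then obtain x where x: "x \<in> carrier_vec r" and v: "v = A0 *\<^sub>v x"
        unfolding colspace_def using A0 by auto
      have "v = A0 *\<^sub>v ((transpose_mat P * transpose_mat Q) *\<^sub>v x)" using v PtQt x by simp
      also have "\<dots> = A *\<^sub>v (transpose_mat Q *\<^sub>v x)" using AA0 A0 Pt Qt x by simp
      finally show "v \<in> colspace A" unfolding colspace_def using Ac Qt x by fastforce
    qed
  qed
  thus ?thesis using cr cs by blast
qed

lemma H_cref_props: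
  assumes H: "H \<in> grassmannian m r"
  shows "\<exists>p. cref_piv m r (H_cref m r H) p \<and> colspace (H_cref m r H) = H"
proof -
  obtain A p where Ap: "cref_piv m r A p" "colspace A = H" using cref_exists[OF H] by blast
  have "H_cref m r H = A"
    unfolding H_cref_def
  proof (rule the_equality)
    show "is_cref m r A \<and> colspace A = H" using Ap is_cref_def by blast
    fix B assume "is_cref m r B \<and> colspace B = H"
    then obtain q where "cref_piv m r B q" "colspace B = H" unfolding is_cref_def by blast
    thus "B = A" using cref_unique[of m r B q A p] Ap by simp
  qed
  thus ?thesis using Ap by blast
qed

lemma piv_set_eq:
  assumes c: "cref_piv m r (H_cref m r H) p"
  shows "piv_set m r H = p ` {..<r}"
proof -
  have q: "\<And>q. cref_piv m r (H_cref m r H) q \<Longrightarrow> \<forall>j<r. q j = p j"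
    using cref_piv_same c by blast
  show ?thesis
  proof
    show "piv_set m r H \<subseteq> p ` {..<r}"
    proof
      fix i assume "i \<in> piv_set m r H"
      then obtain q j where "cref_piv m r (H_cref m r H) q" "j < r" "i = q j"
        unfolding piv_set_def by blast
      with q show "i \<in> p ` {..<r}" by auto
    qed
    show "p ` {..<r} \<subseteq> piv_set m r H" unfolding piv_set_def using c by blast
  qed
qed

lemma P_mat_inj:
  assumes H: "H \<in> grassmannian m r" and rm: "r \<le> m"
    and v: "v \<in> carrier_vec m" and Pv: "P_mat m r H *\<^sub>v v = 0\<^sub>v m"
  shows "v = 0\<^sub>v m"
proof -
  define A where "A = H_cref m r H"
  obtain p where c: "cref_piv m r A p" using H_cref_props[OF H] A_def by blast
  have Ac: "A \<in> carrier_mat m r" using c cref_piv_def by auto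
  define I where "I = p ` {..<r}"
  have pI: "piv_set m r H = I" using piv_set_eq c A_def I_def by simp
  define L where "L = sorted_list_of_set ({..<m} - I)"
  have Im: "I \<subseteq> {..<m}" using c unfolding I_def cref_piv_def by auto
  have injp: "inj_on p {..<r}"
  proof (rule inj_onI)
    fix x y assume "x \<in> {..<r}" "y \<in> {..<r}" "p x = p y"
    then show "x = y" using c unfolding cref_piv_def by (metis lessThan_iff less_irrefl linorder_neqE_nat)
  qed
  have cI: "card I = r" using card_image[OF injp] I_def by simp
  have setL: "set L = {..<m} - I" and dL: "distinct L" unfolding L_def by auto
  have lenL: "length L = m - r"
  proof -
    have "length L = card ({..<m} - I)" using setL dL distinct_card by metis
    also have "\<dots> = m - r" using card_Diff_subset[OF _ Im] cI finite_subset[OF Im] by simp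
    finally show ?thesis .
  qed
  define P where "P = P_mat m r H"
  have Pij: "P $$ (i, j) = (if j < r then A $$ (i, j) else (if i = L ! (j - r) then 1 else 0))"
    if "i < m" "j < m" for i j
    using that unfolding P_def P_mat_def A_def[symmetric] pI L_def by simp
  have Pvi: "(P *\<^sub>v v) $ i = (\<Sum>j\<in>{0..<r}. A $$ (i, j) * v $ j)
      + (\<Sum>j\<in>{r..<m}. (if i = L ! (j - r) then 1 else 0) * v $ j)" if i: "i < m" for i
  proof -
    have "(P *\<^sub>v v) $ i = (\<Sum>j\<in>{0..<m}. P $$ (i, j) * v $ j)"
      using i v unfolding P_def P_mat_def by (auto simp: scalar_prod_def)
    also have "\<dots> = (\<Sum>j\<in>{0..<r}. P $$ (i, j) * v $ j) + (\<Sum>j\<in>{r..<m}. P $$ (i, j) * v $ j)"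
      by (rule sym, rule sum.atLeastLessThan_concat) (use rm in auto)
    also have "(\<Sum>j\<in>{0..<r}. P $$ (i, j) * v $ j) = (\<Sum>j\<in>{0..<r}. A $$ (i, j) * v $ j)"
      by (rule sum.cong) (use Pij i rm in auto)
    also have "(\<Sum>j\<in>{r..<m}. P $$ (i, j) * v $ j) = (\<Sum>j\<in>{r..<m}. (if i = L ! (j - r) then 1 else 0) * v $ j)"
      by (rule sum.cong) (use Pij i rm in auto)
    finally show ?thesis .
  qed
  have Pv0: "(P *\<^sub>v v) $ i = 0" if "i < m" for i using Pv that P_def by simp
  have v1: "v $ k = 0" if k: "k < r" for k
  proof -
    have pk: "p k < m" using c k cref_piv_def by auto
    have "(\<Sum>j\<in>{r..<m}. (if p k = L ! (j - r) then 1 else 0) * v $ j) = 0"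
    proof (rule sum.neutral, rule ballI)
      fix j assume j: "j \<in> {r..<m}"
      then have lm: "L ! (j - r) \<in> set L" using lenL by auto
      have pkI: "p k \<in> I" using I_def k by simp
      have "L ! (j - r) \<notin> I" using setL lm by blast
      then have "p k \<noteq> L ! (j - r)" using pkI by (metis (full_types))
      thus "(if p k = L ! (j - r) then 1 else 0) * v $ j = 0" by simp
    qed
    moreover have "(\<Sum>j\<in>{0..<r}. A $$ (p k, j) * v $ j) = v $ k"
    proof -
      have "(\<Sum>j\<in>{0..<r}. A $$ (p k, j) * v $ j) = (\<Sum>j\<in>{0..<r}. if j = k then v $ j else 0)"
        by (rule sum.cong) (use c k in \<open>auto simp: cref_piv_def\<close>)
      also have "\<dots> = v $ k" using k by simp
      finally show ?thesis .
    qed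
    ultimately show ?thesis using Pvi[OF pk] Pv0[OF pk] by simp
  qed
  have v2: "v $ (r + t) = 0" if t: "t < m - r" for t
  proof -
    have Lt: "L ! t < m" using t lenL setL nth_mem[of t L] by auto
    have "(\<Sum>j\<in>{0..<r}. A $$ (L ! t, j) * v $ j) = 0"
      by (rule sum.neutral) (use v1 in auto)
    moreover have "(\<Sum>j\<in>{r..<m}. (if L ! t = L ! (j - r) then 1 else 0) * v $ j) = v $ (r + t)"
    proof -
      have "(\<Sum>j\<in>{r..<m}. (if L ! t = L ! (j - r) then 1 else 0) * v $ j)
          = (\<Sum>j\<in>{r..<m}. if j = r + t then v $ j else 0)"
      proof (rule sum.cong)
        fix j assume j: "j \<in> {r..<m}"
        have "(L ! t = L ! (j - r)) = (t = j - r)"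
          using nth_eq_iff_index_eq[OF dL] t j lenL by auto
        also have "\<dots> = (j = r + t)" using j by auto
        finally show "(if L ! t = L ! (j - r) then 1 else 0) * v $ j = (if j = r + t then v $ j else 0)"
          by simp
      qed simp
      also have "\<dots> = v $ (r + t)" using t by simp
      finally show ?thesis .
    qed
    ultimately show ?thesis using Pvi[OF Lt] Pv0[OF Lt] by simp
  qed
  show ?thesis
  proof (rule eq_vecI)
    fix i assume "i < dim_vec (0\<^sub>v m :: bit vec)"
    then have i: "i < m" by simp
    show "v $ i = 0\<^sub>v m $ i"
    proof (cases "i < r")
      case True then show ?thesis using v1 i by simp
    next
      case False
      then have "i = r + (i - r)" "i - r < m - r" using i by auto
      then show ?thesis using v2[of "i - r"] i by simp
    qed
  qed (use v in auto)
qed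

lemma P_mat_carrier: "P_mat m r H \<in> carrier_mat m m"
  unfolding P_mat_def by simp

lemma bin_inv_props:
  assumes H: "H \<in> grassmannian m r" and rm: "r \<le> m"
  shows "bin_inv m (P_mat m r H) \<in> carrier_mat m m \<and>
         P_mat m r H * bin_inv m (P_mat m r H) = 1\<^sub>m m \<and> bin_inv m (P_mat m r H) * P_mat m r H = 1\<^sub>m m"
proof -
  define P where "P = P_mat m r H"
  have Pc: "P \<in> carrier_mat m m" using P_mat_carrier P_def by simp
  have "det P \<noteq> 0"
  proof
    assume "det P = 0"
    then obtain v where "v \<in> carrier_vec m" "v \<noteq> 0\<^sub>v m" "P *\<^sub>v v = 0\<^sub>v m"
      using det_0_iff_vec_prod_zero_field[OF Pc] by blast
    thus False using P_mat_inj[OF H rm] P_def by blast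
  qed
  from det_non_zero_imp_unit[OF Pc this, of "()"]
  obtain B where B: "B \<in> carrier_mat m m" "P * B = 1\<^sub>m m" "B * P = 1\<^sub>m m"
    unfolding Units_def ring_mat_def by auto
  have "bin_inv m P = B"
    unfolding bin_inv_def
  proof (rule the_equality)
    show "B \<in> carrier_mat m m \<and> P * B = 1\<^sub>m m \<and> B * P = 1\<^sub>m m" using B by simp
    fix B' assume B'': "B' \<in> carrier_mat m m \<and> P * B' = 1\<^sub>m m \<and> B' * P = 1\<^sub>m m"
    then have B': "B' \<in> carrier_mat m m" "P * B' = 1\<^sub>m m" "B' * P = 1\<^sub>m m" by auto
    have "B' = B' * (P * B)" using B B' right_mult_one_mat[of B' m m] by simp
    also have "\<dots> = (B' * P) * B" by (rule assoc_mult_mat[symmetric, OF B'(1) Pc B(1)])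
    also have "\<dots> = B" using B B' by simp
    finally show "B' = B" .
  qed
  thus ?thesis using B P_def by simp
qed

lemma bit_cases2: "(x::bit) = 0 \<or> x = 1"
  by (cases "x = 0") auto

lemma UNIV_bit: "(UNIV :: bit set) = {0, 1}"
  using bit_cases2 by auto

lemma finite_UNIV_bit[simp]: "finite (UNIV :: bit set)"
  by (simp add: UNIV_bit)

lemma sum_UNIV_bit: "(\<Sum>x\<in>(UNIV::bit set). f x) = f 0 + f 1"
  by (simp add: UNIV_bit)

lemma bij_vec_PiE:
  "bij_betw (\<lambda>c. restrict (\<lambda>i. c $ i) {..<m}) (carrier_vec m :: 'a vec set) (PiE {..<m} (\<lambda>_. UNIV))"
proof (rule bij_betw_byWitness[where f' = "\<lambda>f. vec m f"])
  show "\<forall>a\<in>carrier_vec m. vec m (restrict (($) a) {..<m}) = a"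
    by (auto intro!: eq_vecI)
  show "\<forall>a'\<in>PiE {..<m} (\<lambda>_. UNIV). restrict (($) (vec m a')) {..<m} = (a' :: nat \<Rightarrow> 'a)"
  proof
    fix f :: "nat \<Rightarrow> 'a" assume f: "f \<in> PiE {..<m} (\<lambda>_. UNIV)"
    show "restrict (($) (vec m f)) {..<m} = f"
    proof
      fix i show "restrict (($) (vec m f)) {..<m} i = f i"
        using f by (cases "i < m") (auto simp: PiE_def extensional_def)
    qed
  qed
  show "(\<lambda>c. restrict (($) c) {..<m}) ` carrier_vec m \<subseteq> PiE {..<m} (\<lambda>_. UNIV)"
    by (auto split: if_splits)
  show "(\<lambda>f. vec m f) ` PiE {..<m} (\<lambda>_. UNIV) \<subseteq> carrier_vec m"
    by (rule image_subsetI) simp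
qed

lemma finite_carrier_vec_bit: "finite (carrier_vec m :: bit vec set)"
proof -
  have "finite (PiE {..<m} (\<lambda>_. UNIV :: bit set))" by (rule finite_PiE) auto
  thus ?thesis using bij_betw_finite[OF bij_vec_PiE[of m]] by blast
qed

lemma sum_prod_carrier:
  fixes F :: "nat \<Rightarrow> bit \<Rightarrow> 'b :: comm_semiring_1"
  shows "(\<Sum>c\<in>carrier_vec m. \<Prod>i<m. F i (c $ i)) = (\<Prod>i<m. \<Sum>x\<in>UNIV. F i x)"
proof -
  have "(\<Sum>c\<in>carrier_vec m. \<Prod>i<m. F i (c $ i))
      = (\<Sum>c\<in>carrier_vec m. (\<lambda>g. \<Prod>i<m. F i (g i)) (restrict (\<lambda>i. c $ i) {..<m}))"
    by (rule sum.cong) auto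
  also have "\<dots> = (\<Sum>g\<in>PiE {..<m} (\<lambda>_. UNIV). \<Prod>i<m. F i (g i))"
    by (rule sum.reindex_bij_betw[OF bij_vec_PiE])
  also have "\<dots> = (\<Prod>i<m. \<Sum>x\<in>UNIV. F i x)"
    by (rule prod_sum_PiE[symmetric]) auto
  finally show ?thesis .
qed

lemma lift_mult: "lift (x * y) = lift x * lift y"
  using bit_cases2[of x] bit_cases2[of y] by (auto simp: lift_def)

lemma lift_prod: "lift (\<Prod>i\<in>A. x i) = (\<Prod>i\<in>A. lift (x i))"
proof (cases "finite A")
  case True then show ?thesis
  proof (induction A rule: finite_induct)
    case empty then show ?case by (simp add: lift_def)
  next
    case (insert a F)
    have "lift (\<Prod>i\<in>insert a F. x i) = lift (x a * (\<Prod>i\<in>F. x i))"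
      by (rule arg_cong[where f=lift], rule prod.insert[OF insert(1,2)])
    also have "\<dots> = lift (x a) * (\<Prod>i\<in>F. lift (x i))" by (simp only: lift_mult insert(3))
    also have "\<dots> = (\<Prod>i\<in>insert a F. lift (x i))" by (rule prod.insert[OF insert(1,2), symmetric])
    finally show ?case .
  qed
next
  case False then show ?thesis by (simp add: lift_def)
qed

lemma vec_neq_ex: "u \<in> carrier_vec m \<Longrightarrow> v \<in> carrier_vec m \<Longrightarrow> u \<noteq> v \<Longrightarrow> \<exists>i<m. u $ i \<noteq> v $ i"
  by (metis carrier_vecD eq_vecI)

lemma sqrt_half: "complex_of_real (1 / sqrt 2) * complex_of_real (1 / sqrt 2) = 1 / 2"
proof -
  have "(1 / sqrt 2) * (1 / sqrt 2) = (1/2 :: real)" by simp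
  hence "complex_of_real ((1 / sqrt 2) * (1 / sqrt 2)) = complex_of_real (1/2)" by simp
  thus ?thesis by (simp only: of_real_mult) simp
qed

lemma powr_half_r: "2 powr (- real r / 2) = (1 / sqrt 2) ^ r"
proof -
  have s: "sqrt 2 = (2::real) powr (1/2)" using powr_half_sqrt[of 2] by simp
  have h: "1 / sqrt 2 = (2::real) powr (- (1/2))" by (simp only: s powr_minus_divide)
  have "(1 / sqrt 2) ^ r = ((2::real) powr (- (1/2))) ^ r" by (simp only: h)
  also have "\<dots> = ((2::real) powr (- (1/2))) powr real r"
    by (rule powr_realpow[symmetric]) simp
  also have "\<dots> = 2 powr (- (1/2) * real r)" by (rule powr_powr)
  also have "- (1/2) * real r = - real r / 2" by simp
  finally show ?thesis by simp
qed

lemma i_pow_cnj: "\<i> ^ n * cnj (\<i> ^ n) = 1"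
proof -
  have "\<i> ^ n * cnj (\<i> ^ n) = \<i> ^ n * (- \<i>) ^ n" by simp
  also have "\<dots> = (\<i> * (- \<i>)) ^ n" by (rule power_mult_distrib[symmetric])
  finally show ?thesis by simp
qed

lemma lift01: "lift x = (if x = 1 then 1 else 0)" by (simp add: lift_def)

lemma had_beta: "hadamard2 x y = complex_of_real (1 / sqrt 2) * \<i> ^ (2 * (lift y * lift x))"
  using bit_cases2[of x] bit_cases2[of y] by (auto simp: hadamard2_def lift_def)

lemma id_sz_beta: "id2 x y * sigma_z y y = \<i> ^ (2 * (lift y * lift x)) * (if y = x then 1 else 0)"
  using bit_cases2[of x] bit_cases2[of y] by (auto simp: id2_def sigma_z_def lift_def)

lemma lift_agree: "lift (1 + y + x) = (if y = x then 1 else 0)"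
  using bit_cases2[of x] bit_cases2[of y] by (auto simp: lift_def)

lemma had_orth: "(\<Sum>x\<in>UNIV. hadamard2 y x * cnj (hadamard2 y' x)) = (if y = y' then 1 else 0)"
  using bit_cases2[of y] bit_cases2[of y'] sqrt_half
  by (auto simp: sum_UNIV_bit hadamard2_def)

lemma id_orth: "(\<Sum>x\<in>UNIV. id2 y x * cnj (id2 y' x)) = (if y = y' then 1 else 0)"
  using bit_cases2[of y] bit_cases2[of y']
  by (auto simp: sum_UNIV_bit id2_def)

lemma chirp_core:
  assumes rm: "r \<le> m"
  shows "G_Omega m r u b * (\<Prod>i<m. (if i < r then id2 else sigma_z) (b $ i) (b $ i))
     = complex_of_real (2 powr (- real r / 2)) * \<i> ^ (2 * iprod m b u) * of_nat (f_agree m b u r)"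
proof -
  define c where "c = complex_of_real (1 / sqrt 2)"
  define \<beta> where "\<beta> i = \<i> ^ (2 * (lift (b $ i) * lift (u $ i)))" for i
  define \<gamma> where "\<gamma> i = (if b $ i = u $ i then 1 else 0 :: complex)" for i
  have split: "\<And>f :: nat \<Rightarrow> complex. (\<Prod>i<m. f i) = (\<Prod>i\<in>{0..<r}. f i) * (\<Prod>i\<in>{r..<m}. f i)"
    using rm by (simp add: lessThan_atLeast0 prod.atLeastLessThan_concat)
  have a: "\<i> ^ (2 * iprod m b u) = (\<Prod>i<m. \<beta> i)"
    unfolding iprod_def \<beta>_def by (simp add: sum_distrib_left power_sum)
  have bb: "of_nat (f_agree m b u r) = (\<Prod>i\<in>{r..<m}. \<gamma> i)"
    unfolding f_agree_def lift_prod of_nat_prod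
    by (rule prod.cong[OF refl]) (simp only: lift_agree \<gamma>_def, simp)
  have cc: "complex_of_real (2 powr (- real r / 2)) = c ^ r"
    unfolding c_def powr_half_r by simp
  have "G_Omega m r u b * (\<Prod>i<m. (if i < r then id2 else sigma_z) (b $ i) (b $ i))
      = (\<Prod>i<m. (if i < r then hadamard2 else id2) (u $ i) (b $ i) * (if i < r then id2 else sigma_z) (b $ i) (b $ i))"
    unfolding G_Omega_def tensor2_def by (simp add: prod.distrib)
  also have "\<dots> = (\<Prod>i\<in>{0..<r}. c * \<beta> i) * (\<Prod>i\<in>{r..<m}. \<beta> i * \<gamma> i)"
  proof -
    have 1: "(\<Prod>i\<in>{0..<r}. (if i < r then hadamard2 else id2) (u $ i) (b $ i) * (if i < r then id2 else sigma_z) (b $ i) (b $ i))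
        = (\<Prod>i\<in>{0..<r}. c * \<beta> i)"
      by (rule prod.cong) (auto simp: had_beta c_def \<beta>_def id2_def)
    have 2: "(\<Prod>i\<in>{r..<m}. (if i < r then hadamard2 else id2) (u $ i) (b $ i) * (if i < r then id2 else sigma_z) (b $ i) (b $ i))
        = (\<Prod>i\<in>{r..<m}. \<beta> i * \<gamma> i)"
      by (rule prod.cong) (auto simp: id_sz_beta \<beta>_def \<gamma>_def)
    show ?thesis by (subst split) (simp only: 1 2)
  qed
  also have "\<dots> = c ^ r * ((\<Prod>i\<in>{0..<r}. \<beta> i) * (\<Prod>i\<in>{r..<m}. \<beta> i)) * (\<Prod>i\<in>{r..<m}. \<gamma> i)"
    by (simp add: prod.distrib)
  also have "\<dots> = complex_of_real (2 powr (- real r / 2)) * \<i> ^ (2 * iprod m b u) * of_nat (f_agree m b u r)"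
    by (simp only: cc a bb split[of \<beta>])
  finally show ?thesis .
qed

lemma GO_orth:
  assumes u: "u \<in> carrier_vec m" and u': "u' \<in> carrier_vec m"
  shows "(\<Sum>c\<in>carrier_vec m. G_Omega m r u c * cnj (G_Omega m r u' c)) = (if u = u' then 1 else 0)"
proof -
  define F where "F i = (if i < r then hadamard2 else id2)" for i
  have "(\<Sum>c\<in>carrier_vec m. G_Omega m r u c * cnj (G_Omega m r u' c))
      = (\<Sum>c\<in>carrier_vec m. \<Prod>i<m. (\<lambda>i x. F i (u $ i) x * cnj (F i (u' $ i) x)) i (c $ i))"
    unfolding G_Omega_def tensor2_def F_def by (simp add: prod.distrib)
  also have "\<dots> = (\<Prod>i<m. \<Sum>x\<in>UNIV. F i (u $ i) x * cnj (F i (u' $ i) x))"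
    by (rule sum_prod_carrier)
  also have "\<dots> = (\<Prod>i<m. if u $ i = u' $ i then 1 else 0)"
    by (rule prod.cong) (auto simp: F_def had_orth id_orth)
  also have "\<dots> = (if u = u' then 1 else 0)"
  proof (cases "u = u'")
    case True then show ?thesis by simp
  next
    case False
    then obtain i where "i < m" "u $ i \<noteq> u' $ i" using vec_neq_ex[OF u u'] by blast
    then have "(\<Prod>i<m. if u $ i = u' $ i then 1 else 0) = (0::complex)"
      by (intro prod_zero) auto
    then show ?thesis using False by simp
  qed
  finally show ?thesis .
qed

lemma inv_iff:
  assumes P: "P \<in> carrier_mat m m" and Qi: "Qi \<in> carrier_mat m m" and PQi: "P * Qi = 1\<^sub>m m"
    and QiP: "Qi * P = 1\<^sub>m m" and a: "a \<in> carrier_vec m" and e: "e \<in> carrier_vec m"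
  shows "(a = P *\<^sub>v e) = (e = Qi *\<^sub>v (a :: 'a :: comm_ring_1 vec))"
proof
  assume "a = P *\<^sub>v e"
  then have "Qi *\<^sub>v a = (Qi * P) *\<^sub>v e" using Qi P e by simp
  thus "e = Qi *\<^sub>v a" using QiP e by simp
next
  assume "e = Qi *\<^sub>v a"
  then have "P *\<^sub>v e = (P * Qi) *\<^sub>v a" using Qi P a by simp
  thus "a = P *\<^sub>v e" using PQi a by simp
qed

lemma Zbb_sq: "(\<Prod>i<m. (if i < r then id2 else sigma_z) (b $ i) (b $ i))\<^sup>2 = 1"
proof -
  have "(\<Prod>i<m. (if i < r then id2 else sigma_z) (b $ i) (b $ i))\<^sup>2
      = (\<Prod>i<m. ((if i < r then id2 else sigma_z) (b $ i) (b $ i))\<^sup>2)"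
    by (rule prod_power_distrib)
  also have "\<dots> = (\<Prod>i<m. 1)"
    by (rule prod.cong[OF refl]) (auto simp: id2_def sigma_z_def)
  finally show ?thesis by simp
qed

theorem mainTheorem4:
  fixes m r :: nat and H :: "bit vec set" and S :: "bit mat" and b :: "bit vec"
  assumes "m \<ge> 1" and "r \<le> m"
    and "H \<in> grassmannian m r"
    and "S \<in> sym_bin r"
    and "b \<in> carrier_vec m"
  shows "(\<forall>a\<in>carrier_vec m. bssc m r H S b a =
            capp m (cmult m (cmult m (cmult m (G_D m (transpose_mat (P_mat m r H)))
                    (G_U m (embed_sym m r S))) (G_Omega m r)) (Z_mat m r)) (std_basis b) a)
       \<and> unitary_c m (cmult m (cmult m (G_D m (transpose_mat (P_mat m r H)))
                    (G_U m (embed_sym m r S))) (G_Omega m r))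
       \<and> (\<exists>s::complex. (s = 1 \<or> s = -1) \<and> (\<forall>a\<in>carrier_vec m. bssc m r H S b a =
            s * cmult m (cmult m (G_D m (transpose_mat (P_mat m r H)))
                    (G_U m (embed_sym m r S))) (G_Omega m r) a b))"
proof -
  note H = assms(3) and rm = assms(2) and bc = assms(5)
  define P where "P = P_mat m r H"
  define Qi where "Qi = bin_inv m P"
  have Pc: "P \<in> carrier_mat m m" using P_mat_carrier P_def by simp
  have Qic: "Qi \<in> carrier_mat m m" and PQi: "P * Qi = 1\<^sub>m m" and QiP: "Qi * P = 1\<^sub>m m"
    using bin_inv_props[OF H rm] P_def Qi_def by auto
  define S' where "S' = embed_sym m r S"
  define GD where "GD = G_D m (transpose_mat P)"
  define GU where "GU = G_U m S'"
  define GO where "GO = G_Omega m r"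
  define Z where "Z = Z_mat m r"
  define U where "U = cmult m (cmult m GD GU) GO"
  define Zbb where "Zbb = (\<Prod>i<m. (if i < r then id2 else sigma_z) (b $ i) (b $ i))"
  have fin: "finite (carrier_vec m :: bit vec set)" by (rule finite_carrier_vec_bit)
  have uc: "\<And>a. a \<in> carrier_vec m \<Longrightarrow> Qi *\<^sub>v a \<in> carrier_vec m" using Qic by simp
  have GDe: "GD a e = (if e = Qi *\<^sub>v a then 1 else 0)"
    if a: "a \<in> carrier_vec m" and e: "e \<in> carrier_vec m" for a e
    unfolding GD_def G_D_def using inv_iff[OF Pc Qic PQi QiP a e] by simp
  have DU: "cmult m GD GU a d = (if d = Qi *\<^sub>v a then \<i> ^ qform m S' d else 0)"
    if a: "a \<in> carrier_vec m" and d: "d \<in> carrier_vec m" for a d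
  proof -
    have "cmult m GD GU a d = (\<Sum>e\<in>carrier_vec m. if e = Qi *\<^sub>v a then GU e d else 0)"
      unfolding cmult_def by (rule sum.cong) (auto simp: GDe[OF a])
    also have "\<dots> = GU (Qi *\<^sub>v a) d" using uc[OF a] fin by (simp add: sum.delta)
    also have "\<dots> = (if d = Qi *\<^sub>v a then \<i> ^ qform m S' d else 0)"
      unfolding GU_def G_U_def by auto
    finally show ?thesis .
  qed
  have Ue: "U a c = \<i> ^ qform m S' (Qi *\<^sub>v a) * GO (Qi *\<^sub>v a) c"
    if a: "a \<in> carrier_vec m" and c: "c \<in> carrier_vec m" for a c
  proof -
    have "U a c = (\<Sum>d\<in>carrier_vec m. if d = Qi *\<^sub>v a then \<i> ^ qform m S' d * GO d c else 0)"
      unfolding U_def cmult_def[of m "cmult m GD GU"] by (rule sum.cong) (auto simp: DU[OF a])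
    also have "\<dots> = \<i> ^ qform m S' (Qi *\<^sub>v a) * GO (Qi *\<^sub>v a) c"
      using uc[OF a] fin by (simp add: sum.delta)
    finally show ?thesis .
  qed
  have Ze: "Z d b = (if d = b then Zbb else 0)" if d: "d \<in> carrier_vec m" for d
  proof (cases "d = b")
    case True then show ?thesis unfolding Z_def Z_mat_def tensor2_def Zbb_def by simp
  next
    case False
    then obtain i where i: "i < m" "d $ i \<noteq> b $ i" using vec_neq_ex[OF d bc] by blast
    have "Z d b = 0" unfolding Z_def Z_mat_def tensor2_def
    proof (rule prod_zero)
      show "\<exists>j\<in>{..<m}. (if j < r then id2 else sigma_z) (d $ j) (b $ j) = 0"
        using i by (intro bexI[of _ i]) (auto simp: id2_def sigma_z_def)
    qed simp
    thus ?thesis using False by simp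
  qed
  have UZ: "cmult m U Z a b = U a b * Zbb" if a: "a \<in> carrier_vec m" for a
  proof -
    have "cmult m U Z a b = (\<Sum>d\<in>carrier_vec m. if d = b then U a d * Zbb else 0)"
      unfolding cmult_def by (rule sum.cong) (auto simp: Ze)
    also have "\<dots> = U a b * Zbb" using bc fin by (simp add: sum.delta)
    finally show ?thesis .
  qed
  have main: "bssc m r H S b a = U a b * Zbb" if a: "a \<in> carrier_vec m" for a
  proof -
    define u where "u = Qi *\<^sub>v a"
    have "U a b * Zbb = \<i> ^ qform m S' u * (GO u b * Zbb)"
      using Ue[OF a bc] u_def by simp
    also have "\<dots> = \<i> ^ qform m S' u * (complex_of_real (2 powr (- real r / 2)) * \<i> ^ (2 * iprod m b u) * of_nat (f_agree m b u r))"
      unfolding GO_def Zbb_def using chirp_core[OF rm] by simp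
    also have "\<dots> = bssc m r H S b a"
      unfolding bssc_def Let_def u_def Qi_def P_def S'_def by (simp add: power_add mult_ac)
    finally show ?thesis by simp
  qed
  have part1: "\<forall>a\<in>carrier_vec m. bssc m r H S b a = capp m (cmult m U Z) (std_basis b) a"
  proof
    fix a :: "bit vec" assume a: "a \<in> carrier_vec m"
    have "capp m (cmult m U Z) (std_basis b) a = (\<Sum>d\<in>carrier_vec m. if d = b then cmult m U Z a d else 0)"
      unfolding capp_def std_basis_def by (rule sum.cong) auto
    also have "\<dots> = cmult m U Z a b" using bc fin by (simp add: sum.delta)
    finally show "bssc m r H S b a = capp m (cmult m U Z) (std_basis b) a"
      using main[OF a] UZ[OF a] by simp
  qed
  have part2: "unitary_c m U"
    unfolding unitary_c_def
  proof (intro ballI)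
    fix a a' :: "bit vec" assume a: "a \<in> carrier_vec m" and a': "a' \<in> carrier_vec m"
    define u where "u = Qi *\<^sub>v a"
    define u' where "u' = Qi *\<^sub>v a'"
    have u: "u \<in> carrier_vec m" and u': "u' \<in> carrier_vec m" using uc a a' u_def u'_def by auto
    have "(\<Sum>c\<in>carrier_vec m. U a c * cnj (U a' c))
        = (\<Sum>c\<in>carrier_vec m. (\<i> ^ qform m S' u * cnj (\<i> ^ qform m S' u')) * (GO u c * cnj (GO u' c)))"
      by (rule sum.cong) (auto simp: Ue[OF a] Ue[OF a'] u_def u'_def mult_ac)
    also have "\<dots> = (\<i> ^ qform m S' u * cnj (\<i> ^ qform m S' u')) * (if u = u' then 1 else 0)"
      by (simp only: sum_distrib_left[symmetric] GO_def GO_orth[OF u u'])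
    also have "\<dots> = (if a = a' then 1 else 0)"
    proof (cases "a = a'")
      case True
      then have "u = u'" using u_def u'_def by simp
      then show ?thesis using True i_pow_cnj by simp
    next
      case False
      have "u \<noteq> u'"
      proof
        assume "u = u'"
        then have "a = a'" using inv_iff[OF Pc Qic PQi QiP a u] inv_iff[OF Pc Qic PQi QiP a' u'] u_def u'_def
          by metis
        with False show False by simp
      qed
      then show ?thesis using False by simp
    qed
    finally show "(\<Sum>c\<in>carrier_vec m. U a c * cnj (U a' c)) = (if a = a' then 1 else 0)" .
  qed
  have part3: "\<exists>s::complex. (s = 1 \<or> s = -1) \<and> (\<forall>a\<in>carrier_vec m. bssc m r H S b a = s * U a b)"
  proof (intro exI conjI)
    show "Zbb = 1 \<or> Zbb = -1" using Zbb_sq[where m=m and r=r and b=b] Zbb_def power2_eq_1_iff by metis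
    show "\<forall>a\<in>carrier_vec m. bssc m r H S b a = Zbb * U a b" using main by (simp add: mult.commute)
  qed
  show ?thesis using part1 part2 part3
    unfolding U_def GD_def GU_def GO_def Z_def S'_def P_def by simp
qed

end
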